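(* Let $p$ be a prime and $n,k$ positive integers with $(p,k-1)=1$ and $n=\mathrm{ind}_p(k)$; let $G=G(p,n,k)=\langle a,b;\ a^p=1,\ b^n=1,\ b^{-1}ab=a^k\rangle$, $R=\{k^j-1 \bmod p: j\in\mathbb{Z}_n\}$ and $L=\{1-k^j \bmod p: j\in\mathbb{Z}_n\}$. Then the following are equivalent: (i) $\mathrm{P}(G)=\Lambda(G)$; (ii) $\mathrm{P}(G)\cong\Lambda(G)$; (iii) $|\mathrm{P}(G)|=|\Lambda(G)|$; (iv) $|R^*|=|L^*|$.
   Context: $\mathrm{ind}_p(k)$ is the least positive integer $d$ with $k^d\equiv 1\pmod p$. $S^*$ denotes the multiplicative subsemigroup of $\mathbb{Z}_p$ generated by $S$. Commutators are $[x,y]=x^{-1}y^{-1}xy$. For $g\in G$, $\rho(g),\lambda(g):G\to G$ are $(x)\rho(g)=[x,g]$, $(x)\lambda(g)=[g,x]$. $\mathrm{P}(G)$ and $\Lambda(G)$ are the subsemigroups (under composition) of the semigroup of all maps $G\to G$ generated by $\{\rho(g):g\in G\}$ and $\{\lambda(g):g\in G\}$ respectively. *)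

theory Defs
  imports "HOL-Number_Theory.Number_Theory" "HOL-Algebra.Group" "HOL-Library.FuncSet"
begin

text \<open>ind_p(k) is Pocklington's ord p k (least d>0 with k^d = 1 mod p, for k coprime to p).\<close>

text \<open>Concrete model of G(p,n,k) = <a,b; a^p=1, b^n=1, b^-1 a b = a^k>:
  the pair (j,i) with j in Z_n, i in Z_p stands for b^j a^i.  Since a^i b^j = b^j a^(i k^j),
  (b^j1 a^i1)(b^j2 a^i2) = b^(j1+j2) a^(i1 k^j2 + i2).  Here a = (0,1), b = (1,0).\<close>
definition metacyclic :: "nat \<Rightarrow> nat \<Rightarrow> nat \<Rightarrow> (nat \<times> nat) monoid" where
  "metacyclic p n k =
     \<lparr> carrier = {0..<n} \<times> {0..<p},
       mult = (\<lambda>(j1, i1) (j2, i2). ((j1 + j2) mod n, (i1 * k ^ j2 + i2) mod p)),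
       one = (0, 0) \<rparr>"

definition commutator :: "('a, 'b) monoid_scheme \<Rightarrow> 'a \<Rightarrow> 'a \<Rightarrow> 'a" where
  "commutator G x y = inv\<^bsub>G\<^esub> x \<otimes>\<^bsub>G\<^esub> inv\<^bsub>G\<^esub> y \<otimes>\<^bsub>G\<^esub> x \<otimes>\<^bsub>G\<^esub> y"

definition rho_map :: "('a, 'b) monoid_scheme \<Rightarrow> 'a \<Rightarrow> ('a \<Rightarrow> 'a)" where
  "rho_map G g = (\<lambda>x\<in>carrier G. commutator G x g)"

definition lambda_map :: "('a, 'b) monoid_scheme \<Rightarrow> 'a \<Rightarrow> ('a \<Rightarrow> 'a)" where
  "lambda_map G g = (\<lambda>x\<in>carrier G. commutator G g x)"

inductive_set map_semigroup :: "'a set \<Rightarrow> ('a \<Rightarrow> 'a) set \<Rightarrow> ('a \<Rightarrow> 'a) set"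
  for A :: "'a set" and S :: "('a \<Rightarrow> 'a) set" where
  gen: "f \<in> S \<Longrightarrow> f \<in> map_semigroup A S"
| comp: "f \<in> map_semigroup A S \<Longrightarrow> h \<in> map_semigroup A S \<Longrightarrow> compose A h f \<in> map_semigroup A S"

definition Pgrp :: "('a, 'b) monoid_scheme \<Rightarrow> ('a \<Rightarrow> 'a) set" where
  "Pgrp G = map_semigroup (carrier G) {rho_map G g | g. g \<in> carrier G}"

definition Lgrp :: "('a, 'b) monoid_scheme \<Rightarrow> ('a \<Rightarrow> 'a) set" where
  "Lgrp G = map_semigroup (carrier G) {lambda_map G g | g. g \<in> carrier G}"

definition map_semigroup_iso :: "'a set \<Rightarrow> ('a \<Rightarrow> 'a) set \<Rightarrow> ('a \<Rightarrow> 'a) set \<Rightarrow> bool" where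
  "map_semigroup_iso A S T \<longleftrightarrow>
     (\<exists>\<phi>. bij_betw \<phi> S T \<and>
          (\<forall>f\<in>S. \<forall>h\<in>S. \<phi> (compose A h f) = compose A (\<phi> h) (\<phi> f)))"

inductive_set mult_subsemigroup :: "int \<Rightarrow> int set \<Rightarrow> int set"
  for p :: int and S :: "int set" where
  gen: "x \<in> S \<Longrightarrow> x \<in> mult_subsemigroup p S"
| mult: "x \<in> mult_subsemigroup p S \<Longrightarrow> y \<in> mult_subsemigroup p S \<Longrightarrow> (x * y) mod p \<in> mult_subsemigroup p S"

definition Rset :: "nat \<Rightarrow> nat \<Rightarrow> nat \<Rightarrow> int set" where
  "Rset p n k = {(int k ^ j - 1) mod int p | j. j < n}"

definition Lset :: "nat \<Rightarrow> nat \<Rightarrow> nat \<Rightarrow> int set" where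
  "Lset p n k = {(1 - int k ^ j) mod int p | j. j < n}"

end

theory Submission imports Defs begin

lemma (in group) commutator_eqI:
  assumes "x \<in> carrier G" "g \<in> carrier G" "y \<in> carrier G" "x \<otimes> g = g \<otimes> x \<otimes> y"
  shows "commutator G x g = y"
proof -
  have "commutator G x g = inv x \<otimes> (inv g \<otimes> (x \<otimes> g))"
    using assms by (simp add: commutator_def m_assoc)
  moreover have "inv g \<otimes> (x \<otimes> g) = x \<otimes> y"
    using assms by (simp add: inv_solve_left' m_assoc)
  ultimately show ?thesis using assms by (simp add: inv_solve_left')
qed

lemma int_nd: "0 < x \<Longrightarrow> x < P \<Longrightarrow> \<not> P dvd (x::int)"
  by (auto dest: zdvd_imp_le)

lemma closed_pow_card:
  fixes P :: int
  assumes pr: "prime P" and fin: "finite H" and sub: "H \<subseteq> {1..<P}"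
    and cl: "\<And>x y. x \<in> H \<Longrightarrow> y \<in> H \<Longrightarrow> (x * y) mod P \<in> H"
    and x: "x \<in> H"
  shows "[x ^ card H = 1] (mod P)"
proof -
  define f where "f h = (x * h) mod P" for h
  have ndx: "\<not> P dvd x" using x sub by (intro int_nd) auto
  have inj: "inj_on f H"
  proof (rule inj_onI)
    fix h1 h2 assume h: "h1 \<in> H" "h2 \<in> H" "f h1 = f h2"
    then have "P dvd x * h1 - x * h2" by (simp add: f_def mod_eq_dvd_iff)
    then have "P dvd x * (h1 - h2)" by (simp add: algebra_simps)
    then have "P dvd h1 - h2" using prime_dvd_mult_iff[OF pr] ndx by blast
    then have "h1 mod P = h2 mod P" by (simp only: mod_eq_dvd_iff)
    moreover have "h1 mod P = h1" "h2 mod P = h2" using h sub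
      by (intro mod_pos_pos_trivial; force)+
    ultimately show "h1 = h2" by simp
  qed
  have "f ` H \<subseteq> H" using cl x by (auto simp: f_def)
  then have fH: "f ` H = H" using endo_inj_surj[OF fin _ inj] by blast
  have "prod (\<lambda>h. h) H = prod (\<lambda>h. h) (f ` H)" by (simp only: fH)
  also have "\<dots> = prod f H" by (simp add: prod.reindex[OF inj])
  finally have e1: "prod (\<lambda>h. h) H = prod f H" .
  have "[prod f H = prod (\<lambda>h. x * h) H] (mod P)"
    by (rule cong_prod) (simp add: f_def cong_def)
  moreover have "prod (\<lambda>h. x * h) H = x ^ card H * prod (\<lambda>h. h) H"
    by (simp add: prod.distrib)
  ultimately have "[x ^ card H * prod (\<lambda>h. h) H = 1 * prod (\<lambda>h. h) H] (mod P)"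
    using e1 by (simp add: cong_sym)
  moreover have "coprime (prod (\<lambda>h. h) H) P"
  proof (rule prod_coprime_left)
    fix h assume "h \<in> H"
    then have "\<not> P dvd h" using sub by (intro int_nd) auto
    then show "coprime h P" using prime_imp_coprime[OF pr] coprime_commute by blast
  qed
  ultimately show ?thesis using cong_mult_rcancel by blast
qed

lemma closed_eq_roots:
  fixes p :: nat
  assumes pr: "prime p" and fin: "finite H" and sub: "H \<subseteq> {1..<int p}"
    and cl: "\<And>x y. x \<in> H \<Longrightarrow> y \<in> H \<Longrightarrow> (x * y) mod int p \<in> H"
    and d: "card H = d" "d > 0"
  shows "H = {x \<in> {0..<int p}. [x ^ d = 1] (mod int p)}"
proof (rule card_seteq)
  let ?A = "{x \<in> {..<p}. [x ^ d = 1] (mod p)}"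
  show "finite {x \<in> {0..<int p}. [x ^ d = 1] (mod int p)}"
    by (rule finite_subset[of _ "{0..<int p}"]) auto
  show "H \<subseteq> {x \<in> {0..<int p}. [x ^ d = 1] (mod int p)}"
    using closed_pow_card[of "int p" H, OF _ fin sub cl] pr sub d by auto
  have "{x \<in> {0..<int p}. [x ^ d = 1] (mod int p)} \<subseteq> int ` ?A"
  proof
    fix x assume x: "x \<in> {x \<in> {0..<int p}. [x ^ d = 1] (mod int p)}"
    then have x0: "x = int (nat x)" by simp
    have "[int (nat x ^ d) = int 1] (mod int p)" using x by simp
    then have "[nat x ^ d = 1] (mod p)" by (simp only: cong_int_iff)
    moreover have "nat x < p" using x by auto
    ultimately show "x \<in> int ` ?A" using x0 by blast
  qed
  then have "card {x \<in> {0..<int p}. [x ^ d = 1] (mod int p)} \<le> card (int ` ?A)"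
    by (intro card_mono) auto
  also have "\<dots> \<le> card ?A" by (rule card_image_le) simp
  also have "\<dots> \<le> d" using roots_mod_prime_bound[OF pr d(2), of 1] by simp
  finally show "card {x \<in> {0..<int p}. [x ^ d = 1] (mod int p)} \<le> card H" using d by simp
qed

lemma nonzero_part:
  fixes p :: nat
  assumes pr: "prime p" and sub: "T \<subseteq> {0..<int p}"
    and cl: "\<And>x y. x \<in> T \<Longrightarrow> y \<in> T \<Longrightarrow> (x * y) mod int p \<in> T"
  shows "finite (T - {0})" "T - {0} \<subseteq> {1..<int p}"
    "\<And>x y. x \<in> T - {0} \<Longrightarrow> y \<in> T - {0} \<Longrightarrow> (x * y) mod int p \<in> T - {0}"
proof -
  have prI: "prime (int p)" using pr by simp
  have "finite T" using sub by (rule finite_subset) simp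
  then show "finite (T - {0})" by simp
  show "T - {0} \<subseteq> {1..<int p}"
  proof
    fix x assume "x \<in> T - {0}"
    then have "x \<in> {0..<int p}" "x \<noteq> 0" using sub by (auto simp del: atLeastLessThan_iff)
    then show "x \<in> {1..<int p}" by auto
  qed
  fix x y assume x: "x \<in> T - {0}" and y: "y \<in> T - {0}"
  have xy: "x \<in> T" "x \<noteq> 0" "y \<in> T" "y \<noteq> 0" using x y by auto
  have "x \<in> {0..<int p}" "y \<in> {0..<int p}" using xy sub by (auto simp del: atLeastLessThan_iff)
  then have xr: "0 < x" "x < int p" "0 < y" "y < int p" using xy by auto
  have "\<not> int p dvd x" by (rule int_nd[OF xr(1,2)])
  moreover have "\<not> int p dvd y" by (rule int_nd[OF xr(3,4)])
  ultimately have "\<not> int p dvd x * y" by (simp add: prime_dvd_mult_iff[OF prI])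
  then have "(x * y) mod int p \<noteq> 0" by (simp add: dvd_eq_mod_eq_0)
  moreover have "(x * y) mod int p \<in> T" by (rule cl[OF xy(1) xy(3)])
  ultimately show "(x * y) mod int p \<in> T - {0}" by simp
qed

lemma closed_card_eq:
  fixes p :: nat
  assumes pr: "prime p"
    and T1: "T1 \<subseteq> {0..<int p}" "0 \<in> T1" "\<And>x y. x \<in> T1 \<Longrightarrow> y \<in> T1 \<Longrightarrow> (x * y) mod int p \<in> T1"
    and T2: "T2 \<subseteq> {0..<int p}" "0 \<in> T2" "\<And>x y. x \<in> T2 \<Longrightarrow> y \<in> T2 \<Longrightarrow> (x * y) mod int p \<in> T2"
    and c: "card T1 = card T2"
  shows "T1 = T2"
proof -
  note h1 = nonzero_part[OF pr T1(1) T1(3)]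
  note h2 = nonzero_part[OF pr T2(1) T2(3)]
  have fin1: "finite T1" using T1(1) by (rule finite_subset) simp
  have fin2: "finite T2" using T2(1) by (rule finite_subset) simp
  have cd: "card (T1 - {0}) = card (T2 - {0})" using c T1(2) T2(2) fin1 fin2 by (simp add: card_Diff_singleton)
  have "T1 - {0} = T2 - {0}"
  proof (cases "card (T1 - {0}) = 0")
    case True
    then have e: "T1 - {0} = {}" "T2 - {0} = {}" using h1(1) h2(1) cd by auto
    show ?thesis by (rule trans[OF e(1) e(2)[symmetric]])
  next
    case False
    then have pos: "card (T1 - {0}) > 0" by simp
    have "T1 - {0} = {x \<in> {0..<int p}. [x ^ card (T1 - {0}) = 1] (mod int p)}"
      by (rule closed_eq_roots[OF pr h1(1) h1(2) h1(3) refl pos])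
    moreover have "T2 - {0} = {x \<in> {0..<int p}. [x ^ card (T1 - {0}) = 1] (mod int p)}"
      by (rule closed_eq_roots[OF pr h2(1) h2(2) h2(3) cd[symmetric] pos])
    ultimately show ?thesis by simp
  qed
  then show ?thesis using T1(2) T2(2) by blast
qed

locale mc =
  fixes p n k :: nat
  assumes prime: "prime p" and npos: "n > 0" and kpos: "k > 0"
    and cop: "coprime p (k - 1)" and nord: "n = ord p k"
begin

abbreviation "MG \<equiv> metacyclic p n k"

lemma p_gt1: "p > 1" using prime prime_gt_1_nat by blast

lemma cop_pk: "coprime p k"
proof -
  have "ord p k > 0" using npos nord by simp
  then show ?thesis by simp
qed

lemma kn: "[k ^ n = 1] (mod p)"
  using conjunct1[OF ord_works[of k p]] nord by simp

lemma n_ge2: "n \<ge> 2"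
proof (rule ccontr)
  assume "\<not> n \<ge> 2"
  then have "n = Suc 0" using npos by auto
  then have "[k = 1] (mod p)" using nord ord_eq_Suc_0_iff[of p k] by simp
  then have "p dvd k - 1" by (rule cong_to_1_nat)
  then have "is_unit p" by (rule coprime_common_divisor[OF cop dvd_refl])
  then show False using p_gt1 by simp
qed

lemma kpow_mod: "[k ^ (a mod n) = k ^ a] (mod p)"
proof -
  have e: "k ^ a = (k ^ n) ^ (a div n) * k ^ (a mod n)"
  proof -
    have "k ^ a = k ^ (n * (a div n) + a mod n)" by simp
    also have "\<dots> = (k ^ n) ^ (a div n) * k ^ (a mod n)" by (simp only: power_add power_mult)
    finally show ?thesis .
  qed
  have "[(k ^ n) ^ (a div n) * k ^ (a mod n) = 1 ^ (a div n) * k ^ (a mod n)] (mod p)"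
    by (intro cong_mult cong_pow kn cong_refl)
  then have "[k ^ a = k ^ (a mod n)] (mod p)" by (simp only: e power_one mult_1)
  then show ?thesis by (rule cong_sym)
qed

lemma carrier_G: "carrier MG = {0..<n} \<times> {0..<p}"
  by (simp add: metacyclic_def)
lemma mult_G: "(j1, i1) \<otimes>\<^bsub>MG\<^esub> (j2, i2) = ((j1 + j2) mod n, (i1 * k ^ j2 + i2) mod p)"
  by (simp add: metacyclic_def)
lemma one_G: "\<one>\<^bsub>MG\<^esub> = (0, 0)"
  by (simp add: metacyclic_def)

lemma group_G: "group MG"
proof (rule groupI)
  fix x y assume "x \<in> carrier MG" "y \<in> carrier MG"
  then show "x \<otimes>\<^bsub>MG\<^esub> y \<in> carrier MG"
    using npos p_gt1 by (cases x, cases y) (auto simp: carrier_G mult_G)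
next
  show "\<one>\<^bsub>MG\<^esub> \<in> carrier MG" using npos p_gt1 by (simp add: carrier_G one_G)
next
  fix x y z assume "x \<in> carrier MG" "y \<in> carrier MG" "z \<in> carrier MG"
  obtain j1 i1 j2 i2 j3 i3 where xyz: "x = (j1, i1)" "y = (j2, i2)" "z = (j3, i3)"
    by (cases x, cases y, cases z) auto
  have e1: "((j1 + j2) mod n + j3) mod n = (j1 + (j2 + j3) mod n) mod n"
    by (simp only: mod_add_left_eq mod_add_right_eq add.assoc)
  have c1: "[((i1 * k ^ j2 + i2) mod p) * k ^ j3 + i3 = (i1 * k ^ j2 + i2) * k ^ j3 + i3] (mod p)"
    by (intro cong_add cong_mult cong_refl) (simp add: cong_def)
  have c2: "(i1 * k ^ j2 + i2) * k ^ j3 + i3 = i1 * k ^ (j2 + j3) + (i2 * k ^ j3 + i3)"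
    by (simp add: algebra_simps power_add)
  have c3a: "[k ^ (j2 + j3) = k ^ ((j2 + j3) mod n)] (mod p)"
    by (rule cong_sym[OF kpow_mod])
  have c3b: "[i2 * k ^ j3 + i3 = (i2 * k ^ j3 + i3) mod p] (mod p)"
    by (simp add: cong_def)
  have c3: "[i1 * k ^ (j2 + j3) + (i2 * k ^ j3 + i3) = i1 * k ^ ((j2 + j3) mod n) + (i2 * k ^ j3 + i3) mod p] (mod p)"
    by (rule cong_add[OF cong_mult[OF cong_refl c3a] c3b])
  have "[((i1 * k ^ j2 + i2) mod p) * k ^ j3 + i3 = i1 * k ^ ((j2 + j3) mod n) + (i2 * k ^ j3 + i3) mod p] (mod p)"
    using cong_trans[OF c1[unfolded c2] c3] .
  then have e2: "(((i1 * k ^ j2 + i2) mod p) * k ^ j3 + i3) mod p = (i1 * k ^ ((j2 + j3) mod n) + (i2 * k ^ j3 + i3) mod p) mod p"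
    by (simp only: cong_def)
  have "x \<otimes>\<^bsub>MG\<^esub> y \<otimes>\<^bsub>MG\<^esub> z = (((j1 + j2) mod n + j3) mod n, (((i1 * k ^ j2 + i2) mod p) * k ^ j3 + i3) mod p)"
    by (simp only: xyz mult_G)
  also have "\<dots> = ((j1 + (j2 + j3) mod n) mod n, (i1 * k ^ ((j2 + j3) mod n) + (i2 * k ^ j3 + i3) mod p) mod p)"
    by (simp only: e1 e2)
  also have "\<dots> = x \<otimes>\<^bsub>MG\<^esub> (y \<otimes>\<^bsub>MG\<^esub> z)"
    by (simp only: xyz mult_G)
  finally show "x \<otimes>\<^bsub>MG\<^esub> y \<otimes>\<^bsub>MG\<^esub> z = x \<otimes>\<^bsub>MG\<^esub> (y \<otimes>\<^bsub>MG\<^esub> z)" .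
next
  fix x assume "x \<in> carrier MG"
  then show "\<one>\<^bsub>MG\<^esub> \<otimes>\<^bsub>MG\<^esub> x = x" by (cases x) (auto simp: carrier_G mult_G one_G)
next
  fix x assume x: "x \<in> carrier MG"
  obtain j i where xe: "x = (j, i)" by (cases x)
  have j: "j < n" and i: "i < p" using x xe by (auto simp: carrier_G)
  define y where "y = ((n - j) mod n, ((p - i) * k ^ (n - j)) mod p)"
  have "y \<in> carrier MG" using npos p_gt1 by (simp add: y_def carrier_G)
  moreover have "y \<otimes>\<^bsub>MG\<^esub> x = \<one>\<^bsub>MG\<^esub>"
  proof -
    have nj: "n - j + j = n" using j by simp
    have a: "((n - j) mod n + j) mod n = 0"
      by (simp only: mod_add_left_eq nj mod_self)
    have A: "[((p - i) * k ^ (n - j)) mod p * k ^ j + i = (p - i) * k ^ n + i] (mod p)"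
    proof -
      have "[((p - i) * k ^ (n - j)) mod p * k ^ j + i = (p - i) * k ^ (n - j) * k ^ j + i] (mod p)"
        by (intro cong_add cong_mult cong_refl) (simp add: cong_def)
      moreover have "(p - i) * k ^ (n - j) * k ^ j = (p - i) * k ^ n"
        by (simp only: mult.assoc power_add[symmetric] nj)
      ultimately show ?thesis by simp
    qed
    have B: "[(p - i) * k ^ n + i = (p - i) * 1 + i] (mod p)"
      by (intro cong_add cong_mult cong_refl kn)
    have C: "(p - i) * 1 + i = p" using i by simp
    have "[((p - i) * k ^ (n - j)) mod p * k ^ j + i = p] (mod p)"
      using cong_trans[OF A B] C by simp
    then have D: "(((p - i) * k ^ (n - j)) mod p * k ^ j + i) mod p = 0"
      by (simp add: cong_def)
    show ?thesis using a D by (simp add: y_def xe mult_G one_G)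
  qed
  ultimately show "\<exists>y\<in>carrier MG. y \<otimes>\<^bsub>MG\<^esub> x = \<one>\<^bsub>MG\<^esub>" by blast
qed


definition md :: "int \<Rightarrow> nat" where "md z = nat (z mod int p)"

definition phi :: "int \<Rightarrow> int \<Rightarrow> nat \<times> nat \<Rightarrow> nat \<times> nat" where
  "phi a b = (\<lambda>x\<in>carrier MG. (0, md (a * (1 - int k ^ fst x) + b * int (snd x))))"

lemma md_int: "int (md z) = z mod int p"
  using p_gt1 by (simp add: md_def)

lemma md_lt: "md z < p"
  using p_gt1 by (simp add: md_def nat_less_iff)

lemma md_cong: "[z = z'] (mod int p) \<Longrightarrow> md z = md z'"
  by (simp add: md_def cong_def)

lemma comm_formula:
  assumes "j < n" "i < p" "m < n" "c < p"
  shows "commutator MG (j, i) (m, c) = (0, md (int c * (1 - int k ^ j) + int i * (int k ^ m - 1)))"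
proof (rule group.commutator_eqI[OF group_G])
  show "(j, i) \<in> carrier MG" "(m, c) \<in> carrier MG" using assms by (auto simp: carrier_G)
  show "(0, md (int c * (1 - int k ^ j) + int i * (int k ^ m - 1))) \<in> carrier MG"
    using npos md_lt by (simp add: carrier_G)
  define T where "T = int c * (1 - int k ^ j) + int i * (int k ^ m - 1)"
  have "int ((i * k ^ m + c) mod p) = (int i * int k ^ m + int c) mod int p"
    by (simp add: of_nat_mod)
  also have "\<dots> = (int c * int k ^ j + int i + T) mod int p"
    by (simp add: T_def algebra_simps)
  also have "\<dots> = ((int c * int k ^ j + int i) mod int p + T mod int p) mod int p"
    by (simp add: mod_add_eq)
  also have "\<dots> = int ((((c * k ^ j + i) mod p) * k ^ 0 + md T) mod p)"
    by (simp add: of_nat_mod md_int)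
  finally have e2: "(i * k ^ m + c) mod p = (((c * k ^ j + i) mod p) * k ^ 0 + md T) mod p"
    by (simp only: of_nat_eq_iff)
  have e1: "(j + m) mod n = ((m + j) mod n + 0) mod n" by (simp add: add.commute)
  show "(j, i) \<otimes>\<^bsub>MG\<^esub> (m, c) = (m, c) \<otimes>\<^bsub>MG\<^esub> (j, i) \<otimes>\<^bsub>MG\<^esub> (0, md T)"
    by (simp only: mult_G e1 e2)
qed

lemma rho_eq:
  assumes "(m, c) \<in> carrier MG"
  shows "rho_map MG (m, c) = phi (int c) (int k ^ m - 1)"
  unfolding rho_map_def phi_def
proof (rule restrict_ext)
  fix x assume x: "x \<in> carrier MG"
  obtain j i where xe: "x = (j, i)" by (cases x)
  show "commutator MG x (m, c) = (0, md (int c * (1 - int k ^ fst x) + (int k ^ m - 1) * int (snd x)))"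
    using x assms by (simp add: xe comm_formula carrier_G mult.commute)
qed

lemma lambda_eq:
  assumes "(m, c) \<in> carrier MG"
  shows "lambda_map MG (m, c) = phi (- int c) (1 - int k ^ m)"
  unfolding lambda_map_def phi_def
proof (rule restrict_ext)
  fix x assume x: "x \<in> carrier MG"
  obtain j i where xe: "x = (j, i)" by (cases x)
  have bds: "j < n" "i < p" "m < n" "c < p" using x assms xe by (auto simp: carrier_G)
  have cf: "commutator MG (m, c) (j, i) = (0, md (int i * (1 - int k ^ m) + int c * (int k ^ j - 1)))"
    using bds by (intro comm_formula)
  have eq: "int i * (1 - int k ^ m) + int c * (int k ^ j - 1) = - int c * (1 - int k ^ j) + (1 - int k ^ m) * int i"
    by (simp add: algebra_simps)
  show "commutator MG (m, c) x = (0, md (- int c * (1 - int k ^ fst x) + (1 - int k ^ m) * int (snd x)))"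
    by (simp only: xe cf eq fst_conv snd_conv)
qed

lemma phi_cong:
  assumes "[a = a'] (mod int p)" "[b = b'] (mod int p)"
  shows "phi a b = phi a' b'"
  unfolding phi_def
proof (rule restrict_ext)
  fix x assume "x \<in> carrier MG"
  have "[a * (1 - int k ^ fst x) + b * int (snd x) = a' * (1 - int k ^ fst x) + b' * int (snd x)] (mod int p)"
    by (intro cong_add cong_mult assms cong_refl)
  then show "(0, md (a * (1 - int k ^ fst x) + b * int (snd x))) = (0, md (a' * (1 - int k ^ fst x) + b' * int (snd x)))"
    by (simp add: md_cong)
qed

lemma phi_compose:
  "compose (carrier MG) (phi a2 b2) (phi a1 b1) = phi (a1 * b2) (b1 * b2)"
  unfolding compose_def phi_def[of "a1 * b2" "b1 * b2"]
proof (rule restrict_ext)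
  fix x assume x: "x \<in> carrier MG"
  define T where "T = a1 * (1 - int k ^ fst x) + b1 * int (snd x)"
  have inC: "(0, md T) \<in> carrier MG" using npos md_lt by (simp add: carrier_G)
  have A: "phi a1 b1 x = (0, md T)" using x by (simp add: phi_def T_def)
  have B: "phi a2 b2 (0, md T) = (0, md (b2 * (T mod int p)))" using inC by (simp add: phi_def md_int)
  have C: "md (b2 * (T mod int p)) = md (a1 * b2 * (1 - int k ^ fst x) + b1 * b2 * int (snd x))"
  proof (rule md_cong)
    have "[b2 * (T mod int p) = b2 * T] (mod int p)"
      by (intro cong_mult cong_refl) (simp add: cong_def)
    moreover have "b2 * T = a1 * b2 * (1 - int k ^ fst x) + b1 * b2 * int (snd x)"
      by (simp add: T_def algebra_simps)
    ultimately show "[b2 * (T mod int p) = a1 * b2 * (1 - int k ^ fst x) + b1 * b2 * int (snd x)] (mod int p)"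
      by simp
  qed
  show "phi a2 b2 (phi a1 b1 x) = (0, md (a1 * b2 * (1 - int k ^ fst x) + b1 * b2 * int (snd x)))"
    by (simp only: A B C)
qed

lemma prime_int: "prime (int p)"
  using prime by simp

lemma not_dvd_1k: "\<not> int p dvd (1 - int k)"
proof
  assume "int p dvd (1 - int k)"
  moreover have "int (k - 1) = - (1 - int k)" using kpos by simp
  ultimately have "int p dvd int (k - 1)" by (simp only: dvd_minus_iff)
  then have "p dvd k - 1" by (simp only: of_nat_dvd_iff)
  then have "is_unit p" by (rule coprime_common_divisor[OF cop dvd_refl])
  then show False using p_gt1 by simp
qed

lemma phi_inj:
  assumes "phi a b = phi a' b'"
  shows "a mod int p = a' mod int p \<and> b mod int p = b' mod int p"
proof
  have c01: "(0, 1) \<in> carrier MG" using npos p_gt1 by (simp add: carrier_G)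
  have "phi a b (0, 1) = phi a' b' (0, 1)" using assms by simp
  then have "md b = md b'" using c01 by (simp add: phi_def)
  then have "int (md b) = int (md b')" by simp
  then show "b mod int p = b' mod int p" by (simp only: md_int)
  have c10: "(1, 0) \<in> carrier MG" using n_ge2 p_gt1 by (simp add: carrier_G)
  have "phi a b (1, 0) = phi a' b' (1, 0)" using assms by simp
  then have "md (a * (1 - int k)) = md (a' * (1 - int k))" using c10 by (simp add: phi_def)
  then have "int (md (a * (1 - int k))) = int (md (a' * (1 - int k)))" by simp
  then have "(a * (1 - int k)) mod int p = (a' * (1 - int k)) mod int p" by (simp only: md_int)
  then have "int p dvd a * (1 - int k) - a' * (1 - int k)" by (simp only: mod_eq_dvd_iff)
  then have "int p dvd (a - a') * (1 - int k)" by (simp add: algebra_simps)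
  then have "int p dvd (a - a')" using prime_dvd_mult_iff[OF prime_int] not_dvd_1k by blast
  then show "a mod int p = a' mod int p" by (simp only: mod_eq_dvd_iff)
qed

definition Phi :: "int set \<Rightarrow> (nat \<times> nat \<Rightarrow> nat \<times> nat) set" where
  "Phi S = {phi a b | a b. b \<in> S}"

lemma ms_char:
  assumes "0 \<in> S"
  shows "map_semigroup (carrier MG) (Phi S) = Phi (mult_subsemigroup (int p) S)"
proof
  show "map_semigroup (carrier MG) (Phi S) \<subseteq> Phi (mult_subsemigroup (int p) S)"
  proof
    fix f assume "f \<in> map_semigroup (carrier MG) (Phi S)"
    then show "f \<in> Phi (mult_subsemigroup (int p) S)"
    proof (induction rule: map_semigroup.induct)
      case (gen f)
      then show ?case by (auto simp: Phi_def intro: mult_subsemigroup.gen)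
    next
      case (comp f h)
      from comp.IH(1) obtain a1 b1 where f: "f = phi a1 b1" "b1 \<in> mult_subsemigroup (int p) S"
        by (auto simp: Phi_def)
      from comp.IH(2) obtain a2 b2 where h: "h = phi a2 b2" "b2 \<in> mult_subsemigroup (int p) S"
        by (auto simp: Phi_def)
      have "compose (carrier MG) h f = phi (a1 * b2) ((b1 * b2) mod int p)"
        unfolding f h phi_compose by (rule phi_cong) (simp_all add: cong_def)
      moreover have "(b1 * b2) mod int p \<in> mult_subsemigroup (int p) S"
        by (rule mult_subsemigroup.mult[OF f(2) h(2)])
      ultimately show ?case by (auto simp: Phi_def)
    qed
  qed
next
  show "Phi (mult_subsemigroup (int p) S) \<subseteq> map_semigroup (carrier MG) (Phi S)"
  proof
    fix f assume "f \<in> Phi (mult_subsemigroup (int p) S)"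
    then obtain a b where f: "f = phi a b" and b: "b \<in> mult_subsemigroup (int p) S"
      by (auto simp: Phi_def)
    have "\<forall>a. phi a b \<in> map_semigroup (carrier MG) (Phi S)"
      using b
    proof (induction rule: mult_subsemigroup.induct)
      case (gen x)
      then show ?case by (auto simp: Phi_def intro: map_semigroup.gen)
    next
      case (mult x y)
      show ?case
      proof
        fix a
        show "phi a ((x * y) mod int p) \<in> map_semigroup (carrier MG) (Phi S)"
        proof (cases "int p dvd y")
          case False
          then have "coprime y (int p)" using prime_imp_coprime[OF prime_int] by (simp add: coprime_commute)
          then obtain y' where y': "[y * y' = 1] (mod int p)" using cong_solve_coprime_int by blast
          have m1: "phi 0 y \<in> map_semigroup (carrier MG) (Phi S)" "phi (a * y') x \<in> map_semigroup (carrier MG) (Phi S)"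
            using mult.IH by auto
          have "compose (carrier MG) (phi 0 y) (phi (a * y') x) \<in> map_semigroup (carrier MG) (Phi S)"
            by (rule map_semigroup.comp[OF m1(2) m1(1)])
          moreover have "compose (carrier MG) (phi 0 y) (phi (a * y') x) = phi (a * y' * y) (x * y)"
            by (rule phi_compose)
          moreover have "phi (a * y' * y) (x * y) = phi a ((x * y) mod int p)"
          proof (rule phi_cong)
            have "[a * y' * y = a * 1] (mod int p)"
              using cong_mult[OF cong_refl[of a] y'] by (simp add: ac_simps)
            then show "[a * y' * y = a] (mod int p)" by simp
            show "[x * y = (x * y) mod int p] (mod int p)" by (simp add: cong_def)
          qed
          ultimately show ?thesis by simp
        next
          case True
          note ydvd = True
          show ?thesis
          proof (cases "int p dvd x")
            case False
            then have "coprime x (int p)" using prime_imp_coprime[OF prime_int] by (simp add: coprime_commute)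
            then obtain x' where x': "[x * x' = 1] (mod int p)" using cong_solve_coprime_int by blast
            have m1: "phi 0 x \<in> map_semigroup (carrier MG) (Phi S)" "phi (a * x') y \<in> map_semigroup (carrier MG) (Phi S)"
              using mult.IH by auto
            have "compose (carrier MG) (phi 0 x) (phi (a * x') y) \<in> map_semigroup (carrier MG) (Phi S)"
              by (rule map_semigroup.comp[OF m1(2) m1(1)])
            moreover have "compose (carrier MG) (phi 0 x) (phi (a * x') y) = phi (a * x' * x) (y * x)"
              by (rule phi_compose)
            moreover have "phi (a * x' * x) (y * x) = phi a ((x * y) mod int p)"
            proof (rule phi_cong)
              have "[a * x' * x = a * 1] (mod int p)"
                using cong_mult[OF cong_refl[of a] x'] by (simp add: ac_simps)
              then show "[a * x' * x = a] (mod int p)" by simp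
              show "[y * x = (x * y) mod int p] (mod int p)" by (simp add: cong_def mult.commute)
            qed
            ultimately show ?thesis by simp
          next
            case True
            then have "(x * y) mod int p = 0" using ydvd by auto
            moreover have "phi a 0 \<in> Phi S" using assms by (auto simp: Phi_def)
            ultimately show ?thesis by (auto intro: map_semigroup.gen)
          qed
        qed
      qed
    qed
    then show "f \<in> map_semigroup (carrier MG) (Phi S)" using f by blast
  qed
qed

lemma rho_set: "{rho_map MG g | g. g \<in> carrier MG} = Phi (Rset p n k)"
proof
  show "{rho_map MG g | g. g \<in> carrier MG} \<subseteq> Phi (Rset p n k)"
  proof
    fix f assume "f \<in> {rho_map MG g | g. g \<in> carrier MG}"
    then obtain m c where g: "(m, c) \<in> carrier MG" "f = rho_map MG (m, c)" by auto
    have "f = phi (int c) ((int k ^ m - 1) mod int p)"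
      using g by (simp add: rho_eq) (rule phi_cong, simp_all add: cong_def)
    moreover have "(int k ^ m - 1) mod int p \<in> Rset p n k" using g by (auto simp: Rset_def carrier_G)
    ultimately show "f \<in> Phi (Rset p n k)" by (auto simp: Phi_def)
  qed
next
  show "Phi (Rset p n k) \<subseteq> {rho_map MG g | g. g \<in> carrier MG}"
  proof
    fix f assume "f \<in> Phi (Rset p n k)"
    then obtain a m where f: "f = phi a ((int k ^ m - 1) mod int p)" and m: "m < n"
      by (auto simp: Phi_def Rset_def)
    have g: "(m, nat (a mod int p)) \<in> carrier MG"
      using m p_gt1 by (simp add: carrier_G nat_less_iff)
    have "f = phi (int (nat (a mod int p))) (int k ^ m - 1)"
      unfolding f using p_gt1 by (intro phi_cong) (simp_all add: cong_def)
    then have "f = rho_map MG (m, nat (a mod int p))" using g by (simp add: rho_eq)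
    then show "f \<in> {rho_map MG g | g. g \<in> carrier MG}" using g by blast
  qed
qed

lemma lambda_set: "{lambda_map MG g | g. g \<in> carrier MG} = Phi (Lset p n k)"
proof
  show "{lambda_map MG g | g. g \<in> carrier MG} \<subseteq> Phi (Lset p n k)"
  proof
    fix f assume "f \<in> {lambda_map MG g | g. g \<in> carrier MG}"
    then obtain m c where g: "(m, c) \<in> carrier MG" "f = lambda_map MG (m, c)" by auto
    have "f = phi (- int c) ((1 - int k ^ m) mod int p)"
      using g by (simp add: lambda_eq) (rule phi_cong, simp_all add: cong_def)
    moreover have "(1 - int k ^ m) mod int p \<in> Lset p n k" using g by (auto simp: Lset_def carrier_G)
    ultimately show "f \<in> Phi (Lset p n k)" by (auto simp: Phi_def)
  qed
next
  show "Phi (Lset p n k) \<subseteq> {lambda_map MG g | g. g \<in> carrier MG}"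
  proof
    fix f assume "f \<in> Phi (Lset p n k)"
    then obtain a m where f: "f = phi a ((1 - int k ^ m) mod int p)" and m: "m < n"
      by (auto simp: Phi_def Lset_def)
    have g: "(m, nat ((- a) mod int p)) \<in> carrier MG"
      using m p_gt1 by (simp add: carrier_G nat_less_iff)
    have "[a = - int (nat ((- a) mod int p))] (mod int p)"
    proof -
      have "int (nat ((- a) mod int p)) = (- a) mod int p" using p_gt1 by simp
      then show ?thesis by (simp add: cong_def mod_minus_eq)
    qed
    then have "f = phi (- int (nat ((- a) mod int p))) (1 - int k ^ m)"
      unfolding f by (intro phi_cong) (simp_all add: cong_def)
    then have "f = lambda_map MG (m, nat ((- a) mod int p))" using g by (simp add: lambda_eq)
    then show "f \<in> {lambda_map MG g | g. g \<in> carrier MG}" using g by blast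
  qed
qed

lemma zero_R: "0 \<in> Rset p n k" using npos by (force simp: Rset_def)
lemma zero_L: "0 \<in> Lset p n k" using npos by (force simp: Lset_def)

lemma Pgrp_eq: "Pgrp MG = Phi (mult_subsemigroup (int p) (Rset p n k))"
  unfolding Pgrp_def rho_set by (rule ms_char[OF zero_R])

lemma Lgrp_eq: "Lgrp MG = Phi (mult_subsemigroup (int p) (Lset p n k))"
  unfolding Lgrp_def lambda_set by (rule ms_char[OF zero_L])

lemma mss_range:
  assumes "S \<subseteq> {0..<int p}"
  shows "mult_subsemigroup (int p) S \<subseteq> {0..<int p}"
proof
  fix x assume "x \<in> mult_subsemigroup (int p) S"
  then show "x \<in> {0..<int p}"
    by (induction rule: mult_subsemigroup.induct) (use assms p_gt1 in auto)
qed

lemma R_range: "Rset p n k \<subseteq> {0..<int p}" using p_gt1 by (auto simp: Rset_def)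
lemma L_range: "Lset p n k \<subseteq> {0..<int p}" using p_gt1 by (auto simp: Lset_def)

lemma card_Phi:
  assumes T: "T \<subseteq> {0..<int p}"
  shows "card (Phi T) = p * card T"
proof -
  have img: "Phi T = (\<lambda>(a, b). phi a b) ` ({0..<int p} \<times> T)"
  proof
    show "Phi T \<subseteq> (\<lambda>(a, b). phi a b) ` ({0..<int p} \<times> T)"
    proof
      fix f assume "f \<in> Phi T"
      then obtain a b where f: "f = phi a b" "b \<in> T" by (auto simp: Phi_def)
      have "f = phi (a mod int p) b" unfolding f by (rule phi_cong) (simp_all add: cong_def)
      moreover have "a mod int p \<in> {0..<int p}" using p_gt1 by simp
      ultimately show "f \<in> (\<lambda>(a, b). phi a b) ` ({0..<int p} \<times> T)" using f(2) by force
    qed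
  next
    show "(\<lambda>(a, b). phi a b) ` ({0..<int p} \<times> T) \<subseteq> Phi T" by (auto simp: Phi_def)
  qed
  have inj: "inj_on (\<lambda>(a, b). phi a b) ({0..<int p} \<times> T)"
  proof (rule inj_onI)
    fix u v assume u: "u \<in> {0..<int p} \<times> T" and v: "v \<in> {0..<int p} \<times> T"
      and e: "(\<lambda>(a, b). phi a b) u = (\<lambda>(a, b). phi a b) v"
    obtain a b where ue: "u = (a, b)" by (cases u)
    obtain a' b' where ve: "v = (a', b')" by (cases v)
    have "a mod int p = a' mod int p \<and> b mod int p = b' mod int p"
      using e by (intro phi_inj) (simp add: ue ve)
    moreover have "a \<in> {0..<int p}" "a' \<in> {0..<int p}" "b \<in> {0..<int p}" "b' \<in> {0..<int p}"
      using u v T ue ve by auto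
    ultimately show "u = v" using ue ve by simp
  qed
  have "card (Phi T) = card ({0..<int p} \<times> T)" unfolding img by (rule card_image[OF inj])
  also have "\<dots> = p * card T" by (simp add: card_cartesian_product)
  finally show ?thesis .
qed



lemma RL_eq:
  assumes "card (mult_subsemigroup (int p) (Rset p n k)) = card (mult_subsemigroup (int p) (Lset p n k))"
  shows "mult_subsemigroup (int p) (Rset p n k) = mult_subsemigroup (int p) (Lset p n k)"
proof (rule closed_card_eq[OF prime mss_range[OF R_range] mult_subsemigroup.gen[OF zero_R]
        _ mss_range[OF L_range] mult_subsemigroup.gen[OF zero_L] _ assms])
  show "\<And>x y. x \<in> mult_subsemigroup (int p) (Rset p n k) \<Longrightarrow> y \<in> mult_subsemigroup (int p) (Rset p n k)
     \<Longrightarrow> (x * y) mod int p \<in> mult_subsemigroup (int p) (Rset p n k)"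
    by (rule mult_subsemigroup.mult)
  show "\<And>x y. x \<in> mult_subsemigroup (int p) (Lset p n k) \<Longrightarrow> y \<in> mult_subsemigroup (int p) (Lset p n k)
     \<Longrightarrow> (x * y) mod int p \<in> mult_subsemigroup (int p) (Lset p n k)"
    by (rule mult_subsemigroup.mult)
qed

end

theorem theorem6p7:
  fixes p n k :: nat
  assumes "prime p" and "n > 0" and "k > 0"
    and "coprime p (k - 1)" and "n = ord p k"
  defines "G \<equiv> metacyclic p n k"
  shows "(Pgrp G = Lgrp G \<longleftrightarrow> map_semigroup_iso (carrier G) (Pgrp G) (Lgrp G))
       \<and> (map_semigroup_iso (carrier G) (Pgrp G) (Lgrp G) \<longleftrightarrow> card (Pgrp G) = card (Lgrp G))
       \<and> (card (Pgrp G) = card (Lgrp G) \<longleftrightarrow>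
            card (mult_subsemigroup (int p) (Rset p n k)) = card (mult_subsemigroup (int p) (Lset p n k)))"
proof -
  interpret mc p n k using assms(1-5) by unfold_locales
  let ?R = "mult_subsemigroup (int p) (Rset p n k)"
  let ?L = "mult_subsemigroup (int p) (Lset p n k)"
  have P: "Pgrp G = Phi ?R" unfolding G_def by (rule Pgrp_eq)
  have L: "Lgrp G = Phi ?L" unfolding G_def by (rule Lgrp_eq)
  have cP: "card (Pgrp G) = p * card ?R" unfolding P by (rule card_Phi[OF mss_range[OF R_range]])
  have cL: "card (Lgrp G) = p * card ?L" unfolding L by (rule card_Phi[OF mss_range[OF L_range]])
  have iii_iv: "card (Pgrp G) = card (Lgrp G) \<longleftrightarrow> card ?R = card ?L"
    unfolding cP cL using p_gt1 by simp
  have iv_i: "card ?R = card ?L \<Longrightarrow> Pgrp G = Lgrp G"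
    unfolding P L using RL_eq by simp
  have i_ii: "Pgrp G = Lgrp G \<Longrightarrow> map_semigroup_iso (carrier G) (Pgrp G) (Lgrp G)"
    unfolding map_semigroup_iso_def by (rule exI[of _ id]) simp
  have ii_iii: "map_semigroup_iso (carrier G) (Pgrp G) (Lgrp G) \<Longrightarrow> card (Pgrp G) = card (Lgrp G)"
    unfolding map_semigroup_iso_def using bij_betw_same_card by blast
  show ?thesis using iii_iv iv_i i_ii ii_iii by blast
qed

end
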